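(* Fix $n\in\mathbb Z_{\ge2}$. Let $(\pi,\mathfrak c)$ be an inherited coloured permutation (for $\searrow_n$), let $(y,f)$ be an active site of $(\pi,\mathfrak c)$, and let $i\in[|\pi|]$. Then: (1) if $\mathfrak c(i)\ge f$, then $y>\pi(i)$; (2) if $\pi(i)<y$ and $\mathfrak c(i)<f$, then there exists $k>i$ with $\pi(k)\ge y$ and $\mathfrak c(k)=\mathfrak c(i)$; (3) if $\pi(i)<y$ and $\mathfrak c(i)<f$, then there exists $h>i$ with $\pi(h)\ge y$ and $\mathfrak c(h)=f-1$.
   Context: $\searrow_n=n(n-1)\cdots1$; $\mathrm{Av}(\searrow_n)$ is the set of permutations with no (not necessarily consecutive) occurrence of $\searrow_n$, $\mathrm{Av}_m(\searrow_n)$ those of size $m$. For $\pi\in\mathcal S_m$ and $y\in[m+1]$, $\pi^{*y}$ is the permutation of $[m+1]$ with entries in the same relative order as $\pi(1),\dots,\pi(m),y-1/2$. A colouring of $\pi\in\mathcal S_m$ is a map $\mathfrak c:[m]\to\mathbb Z_{\ge1}$; for $I=\{i_1<\dots<i_j\}$, $\mathrm{pat}_I(\sigma,\mathfrak c)=(\mathrm{pat}_I(\sigma),\mathfrak c')$ with $\mathfrak c'(\ell)=\mathfrak c(i_\ell)$, where $\mathrm{pat}_I(\sigma)$ is the permutation with entries in the same relative order as $\sigma(i_1),\dots,\sigma(i_j)$; $\mathrm{en}_j=\mathrm{pat}_{\{m-j+1,\dots,m\}}$. The RITMO colouring $\mathbb C(\sigma)$ processes indices in decreasing order of value, giving index $i$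 the smallest positive integer $c$ such that no already coloured index $j<i$ has colour $c$ (equivalently: colour 1 on left-to-right maxima, colour 2 on left-to-right maxima of the remaining entries, etc.); $\mathbb S(\sigma)=(\sigma,\mathbb C(\sigma))$. A coloured permutation $(\pi,\mathfrak c)$ with $\pi\in\mathrm{Av}_k(\searrow_n)$ is inherited if there is $\sigma\in\mathrm{Av}(\searrow_n)$ with $|\sigma|\ge k$ and $\mathrm{en}_k(\mathbb S(\sigma))=(\pi,\mathfrak c)$ (its colours then lie in $[n-1]$). For $y\in[|\pi|+1]$ and $f\ge1$, $(\pi,\mathfrak c)^{*(y,f)}=(\pi^{*y},\mathfrak c^{*f})$ where $\mathfrak c^{*f}$ agrees with $\mathfrak c$ on $[|\pi|]$ and gives colour $f$ to index $|\pi|+1$. An active site of an inherited $(\pi,\mathfrak c)$ is a pair $(y,f)$ with $y\in[|\pi|+1]$, $f\in[n-1]$, such that $(\pi,\mathfrak c)^{*(y,f)}$ is inherited. *)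

theory Defs
  imports Complex_Main
begin

text \<open>Permutations of [m] are lists of length m (one-line notation, entries 1..m);
  index i (1-based) corresponds to list position i-1. Colourings are lists of
  positive integers of the same length.\<close>

definition is_perm :: "nat list \<Rightarrow> bool" where
  "is_perm xs \<longleftrightarrow> distinct xs \<and> set xs = {1..length xs}"

definition contains_dec :: "nat \<Rightarrow> nat list \<Rightarrow> bool" where
  "contains_dec n \<sigma> \<longleftrightarrow> (\<exists>is. length is = n \<and> sorted_wrt (<) is \<and> (\<forall>i\<in>set is. i < length \<sigma>)
       \<and> sorted_wrt (>) (map (\<lambda>i. \<sigma> ! i) is))"

definition Av :: "nat \<Rightarrow> nat list set" where
  "Av n = {\<sigma>. is_perm \<sigma> \<and> \<not> contains_dec n \<sigma>}"

definition std :: "'a::linorder list \<Rightarrow> nat list" where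
  "std xs = map (\<lambda>x. card {z \<in> set xs. z \<le> x}) xs"

definition ins :: "nat list \<Rightarrow> nat \<Rightarrow> nat list" where
  "ins \<pi> y = std (map real \<pi> @ [real y - 1/2])"

text \<open>RITMO colouring: process values m, m-1, ..., 1; the index i of the current value
  gets the smallest c \<ge> 1 such that no already coloured index j < i has colour c.
  The auxiliary map gives colour 0 to not-yet-coloured indices (1-based).\<close>
fun ritmo_aux :: "nat list \<Rightarrow> nat \<Rightarrow> nat \<Rightarrow> nat" where
  "ritmo_aux \<sigma> 0 = (\<lambda>_. 0)"
| "ritmo_aux \<sigma> (Suc k) =
     (let col = ritmo_aux \<sigma> k;
          v = length \<sigma> - k;
          i = (THE i. 1 \<le> i \<and> i \<le> length \<sigma> \<and> \<sigma> ! (i - 1) = v)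
      in col(i := (LEAST c. 1 \<le> c \<and> (\<forall>j. 1 \<le> j \<and> j < i \<and> col j \<noteq> 0 \<longrightarrow> col j \<noteq> c))))"

definition ritmo :: "nat list \<Rightarrow> nat list" where
  "ritmo \<sigma> = map (ritmo_aux \<sigma> (length \<sigma>)) [1..<length \<sigma> + 1]"

definition en :: "nat \<Rightarrow> nat list \<times> nat list \<Rightarrow> nat list \<times> nat list" where
  "en k sc = (std (drop (length (fst sc) - k) (fst sc)), drop (length (fst sc) - k) (snd sc))"

definition inherited :: "nat \<Rightarrow> nat list \<Rightarrow> nat list \<Rightarrow> bool" where
  "inherited n \<pi> c \<longleftrightarrow> \<pi> \<in> Av n \<and>
     (\<exists>\<sigma>. \<sigma> \<in> Av n \<and> length \<sigma> \<ge> length \<pi> \<and> en (length \<pi>) (\<sigma>, ritmo \<sigma>) = (\<pi>, c))"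

definition active_site :: "nat \<Rightarrow> nat list \<Rightarrow> nat list \<Rightarrow> nat \<Rightarrow> nat \<Rightarrow> bool" where
  "active_site n \<pi> c y f \<longleftrightarrow> y \<in> {1..length \<pi> + 1} \<and> f \<in> {1..n - 1} \<and>
     inherited n (ins \<pi> y) (c @ [f])"

end

theory Submission
  imports Defs
begin

lemma std_len[simp]: "length (std xs) = length xs"
  by (simp add: std_def)

lemma std_less:
  fixes xs :: "'a::linorder list"
  assumes "a < length xs" "b < length xs"
  shows "(std xs ! a < std xs ! b) \<longleftrightarrow> (xs!a < xs!b)"
proof -
  have e: "\<And>t. t < length xs \<Longrightarrow> std xs ! t = card {z \<in> set xs. z \<le> xs!t}"
    by (simp add: std_def)
  show ?thesis
  proof
    assume h: "std xs ! a < std xs ! b"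
    show "xs!a < xs!b"
    proof (rule ccontr)
      assume "\<not> xs!a < xs!b"
      hence "{z \<in> set xs. z \<le> xs!b} \<subseteq> {z \<in> set xs. z \<le> xs!a}" by auto
      hence "card {z \<in> set xs. z \<le> xs!b} \<le> card {z \<in> set xs. z \<le> xs!a}"
        by (intro card_mono) auto
      with h e assms show False by simp
    qed
  next
    assume h: "xs!a < xs!b"
    have m1: "xs!b \<in> {z \<in> set xs. z \<le> xs!b}" using assms by simp
    have m2: "xs!b \<notin> {z \<in> set xs. z \<le> xs!a}" using h by (auto simp: not_le)
    have "{z \<in> set xs. z \<le> xs!a} \<subset> {z \<in> set xs. z \<le> xs!b}"
      using h m1 m2 by auto
    hence "card {z \<in> set xs. z \<le> xs!a} < card {z \<in> set xs. z \<le> xs!b}"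
      by (intro psubset_card_mono) auto
    with e assms show "std xs ! a < std xs ! b" by simp
  qed
qed

lemma perm_val: "is_perm s \<Longrightarrow> t < length s \<Longrightarrow> 1 \<le> s!t \<and> s!t \<le> length s"
  unfolding is_perm_def by (metis atLeastAtMost_iff nth_mem)

lemma perm_inj: "is_perm s \<Longrightarrow> a < length s \<Longrightarrow> b < length s \<Longrightarrow> s!a = s!b \<Longrightarrow> a = b"
  unfolding is_perm_def by (simp add: nth_eq_iff_index_eq)

lemma perm_ex: "is_perm s \<Longrightarrow> 1 \<le> v \<Longrightarrow> v \<le> length s \<Longrightarrow> \<exists>p. 1 \<le> p \<and> p \<le> length s \<and> s!(p-1) = v"
proof -
  assume "is_perm s" "1 \<le> v" "v \<le> length s"
  then have "v \<in> set s" unfolding is_perm_def by auto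
  then obtain t where "t < length s" "s!t = v" by (metis in_set_conv_nth)
  thus ?thesis by (intro exI[of _ "Suc t"]) auto
qed

lemma least_ex2: fixes i :: nat shows "\<exists>c::nat. 1 \<le> c \<and> (\<forall>j. 1 \<le> j \<and> j < i \<and> Q j \<longrightarrow> g j \<noteq> c)"
proof (intro exI[of _ "Suc (\<Sum>j<i. g j)"] conjI allI impI)
  fix j assume "1 \<le> j \<and> j < i \<and> Q j"
  hence "g j \<le> (\<Sum>j<i. g j)" by (intro member_le_sum) auto
  thus "g j \<noteq> Suc (\<Sum>j<i. (g j :: nat))" by simp
qed simp

lemma least_ex: fixes i :: nat shows "\<exists>c::nat. 1 \<le> c \<and> (\<forall>j. 1 \<le> j \<and> j < i \<and> col j \<noteq> 0 \<longrightarrow> col j \<noteq> c)"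
proof (intro exI[of _ "Suc (\<Sum>j<i. col j)"] conjI allI impI)
  fix j assume "1 \<le> j \<and> j < i \<and> col j \<noteq> 0"
  hence "col j \<le> (\<Sum>j<i. col j)" by (intro member_le_sum) auto
  thus "col j \<noteq> Suc (\<Sum>j<i. (col j :: nat))" by simp
qed simp

lemma step:
  assumes "is_perm s" "1 \<le> p" "p \<le> length s"
  shows "ritmo_aux s (Suc (length s - s!(p-1))) =
     (ritmo_aux s (length s - s!(p-1)))(p := (LEAST c. 1 \<le> c \<and> (\<forall>j. 1 \<le> j \<and> j < p \<and> ritmo_aux s (length s - s!(p-1)) j \<noteq> 0 \<longrightarrow> ritmo_aux s (length s - s!(p-1)) j \<noteq> c)))"
proof -
  have v: "1 \<le> s!(p-1) \<and> s!(p-1) \<le> length s" using perm_val[OF assms(1), of "p-1"] assms by auto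
  have th: "(THE i. 1 \<le> i \<and> i \<le> length s \<and> s ! (i - 1) = length s - (length s - s!(p-1))) = p"
  proof (rule the_equality)
    show "1 \<le> p \<and> p \<le> length s \<and> s ! (p - 1) = length s - (length s - s!(p-1))" using assms v by auto
  next
    fix i assume "1 \<le> i \<and> i \<le> length s \<and> s ! (i - 1) = length s - (length s - s!(p-1))"
    hence "s!(i-1) = s!(p-1)" "i - 1 < length s" using v by auto
    hence "i - 1 = p - 1" using perm_inj[OF assms(1)] assms by auto
    thus "i = p" using assms \<open>1 \<le> i \<and> _\<close> by auto
  qed
  show ?thesis by (simp only: ritmo_aux.simps Let_def th)
qed

lemma step_ex:
  assumes "is_perm s" "k < length s"
  shows "\<exists>p L. 1 \<le> p \<and> p \<le> length s \<and> s!(p-1) = length s - k \<and> 1 \<le> L \<and>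
     ritmo_aux s (Suc k) = (ritmo_aux s k)(p := L)"
proof -
  have "\<exists>p. 1 \<le> p \<and> p \<le> length s \<and> s!(p-1) = length s - k"
    using perm_ex[OF assms(1), of "length s - k"] assms by auto
  then obtain p where p: "1 \<le> p" "p \<le> length s" "s!(p-1) = length s - k" by blast
  have kk: "k = length s - s!(p-1)" using p assms by auto
  show ?thesis
    apply (rule exI[of _ p])
    apply (rule exI[of _ "(LEAST c. 1 \<le> c \<and> (\<forall>j. 1 \<le> j \<and> j < p \<and> ritmo_aux s k j \<noteq> 0 \<longrightarrow> ritmo_aux s k j \<noteq> c))"])
    using p step[OF assms(1) p(1,2)] LeastI_ex[OF least_ex[of p "ritmo_aux s k"]] kk by auto
qed

lemma L1:
  assumes "is_perm s"
  shows "k \<le> length s \<Longrightarrow> (ritmo_aux s k p \<noteq> 0) \<longleftrightarrow> (1 \<le> p \<and> p \<le> length s \<and> length s - k < s!(p-1))"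
proof (induction k arbitrary: p)
  case 0
  have "1 \<le> p \<Longrightarrow> p \<le> length s \<Longrightarrow> s!(p-1) \<le> length s" using perm_val[OF assms, of "p-1"] by simp
  thus ?case by auto
next
  case (Suc k)
  obtain p0 L where o: "1 \<le> p0" "p0 \<le> length s" "s!(p0-1) = length s - k" "1 \<le> L"
     "ritmo_aux s (Suc k) = (ritmo_aux s k)(p0 := L)"
    using step_ex[OF assms, of k] Suc.prems by auto
  show ?case
  proof (cases "p = p0")
    case True thus ?thesis using o Suc.prems by auto
  next
    case False
    have "(1 \<le> p \<and> p \<le> length s \<and> length s - k < s!(p-1)) \<longleftrightarrow>
          (1 \<le> p \<and> p \<le> length s \<and> length s - Suc k < s!(p-1))"
    proof -
      { assume a: "1 \<le> p" "p \<le> length s" "s!(p-1) = length s - k"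
        hence "p - 1 = p0 - 1" using perm_inj[OF assms, of "p-1" "p0-1"] o by auto
        hence False using a o False by auto }
      thus ?thesis using Suc.prems by force
    qed
    thus ?thesis using Suc.IH[of p] Suc.prems o False by auto
  qed
qed

lemma L2:
  assumes "is_perm s" "k \<le> k'" "k' \<le> length s" "ritmo_aux s k p \<noteq> 0"
  shows "ritmo_aux s k' p = ritmo_aux s k p"
  using assms(2,3)
proof (induction k' rule: dec_induct)
  case base thus ?case by simp
next
  case (step k'')
  obtain p0 L where o: "1 \<le> p0" "p0 \<le> length s" "s!(p0-1) = length s - k''" "1 \<le> L"
     "ritmo_aux s (Suc k'') = (ritmo_aux s k'')(p0 := L)"
    using step_ex[OF assms(1), of k''] step by auto
  have IH: "ritmo_aux s k'' p = ritmo_aux s k p" using step by auto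
  hence "ritmo_aux s k'' p \<noteq> 0" using assms(4) by simp
  hence "length s - k'' < s!(p-1)" using L1[OF assms(1), of k'' p] step by auto
  hence "p \<noteq> p0" using o by auto
  thus ?case using o IH by simp
qed

definition col :: "nat list \<Rightarrow> nat \<Rightarrow> nat" where
  "col s p = ritmo_aux s (length s) p"

lemma char:
  assumes "is_perm s" "1 \<le> p" "p \<le> length s"
  shows "col s p = (LEAST c. 1 \<le> c \<and> (\<forall>j. 1 \<le> j \<and> j < p \<and> s!(j-1) > s!(p-1) \<longrightarrow> col s j \<noteq> c))"
proof -
  define k where "k = length s - s!(p-1)"
  have v: "1 \<le> s!(p-1) \<and> s!(p-1) \<le> length s" using perm_val[OF assms(1), of "p-1"] assms by auto
  have sk: "Suc k \<le> length s" using v k_def by auto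
  have nz: "ritmo_aux s (Suc k) p \<noteq> 0" using L1[OF assms(1) sk, of p] assms v k_def by auto
  have "col s p = ritmo_aux s (Suc k) p" unfolding col_def using L2[OF assms(1) _ _ nz] sk by auto
  also have "\<dots> = (LEAST c. 1 \<le> c \<and> (\<forall>j. 1 \<le> j \<and> j < p \<and> ritmo_aux s k j \<noteq> 0 \<longrightarrow> ritmo_aux s k j \<noteq> c))"
    using step[OF assms] k_def by simp
  also have "\<dots> = (LEAST c. 1 \<le> c \<and> (\<forall>j. 1 \<le> j \<and> j < p \<and> s!(j-1) > s!(p-1) \<longrightarrow> col s j \<noteq> c))"
  proof -
    have "\<And>j. 1 \<le> j \<Longrightarrow> j < p \<Longrightarrow> (ritmo_aux s k j \<noteq> 0 \<longleftrightarrow> s!(j-1) > s!(p-1))"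
      using L1[OF assms(1), of k] sk assms v k_def by auto
    moreover have "\<And>j. ritmo_aux s k j \<noteq> 0 \<Longrightarrow> ritmo_aux s k j = col s j"
      unfolding col_def using L2[OF assms(1)] sk by (metis Suc_leD le_refl)
    ultimately show ?thesis by metis
  qed
  finally show ?thesis .
qed

lemma propA: assumes "is_perm s" "1 \<le> p" "p \<le> length s" shows "1 \<le> col s p"
  using LeastI_ex[OF least_ex2[of p "\<lambda>j. s!(j-1) > s!(p-1)" "col s"]] char[OF assms]
  by simp

lemma propB: assumes "is_perm s" "1 \<le> p" "p \<le> length s" "1 \<le> q" "q < p" "s!(q-1) > s!(p-1)"
  shows "col s q \<noteq> col s p"
proof -
  let ?P = "\<lambda>c. 1 \<le> c \<and> (\<forall>j. 1 \<le> j \<and> j < p \<and> s!(j-1) > s!(p-1) \<longrightarrow> col s j \<noteq> c)"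
  have ex: "\<exists>c. ?P c"
    using least_ex2[of p "\<lambda>j. s!(j-1) > s!(p-1)" "col s"] by simp
  have "?P (col s p)" using char[OF assms(1-3)] LeastI_ex[OF ex] by simp
  thus ?thesis using assms by auto
qed

lemma propC: assumes "is_perm s" "1 \<le> p" "p \<le> length s" "1 \<le> c" "c < col s p"
  shows "\<exists>j. 1 \<le> j \<and> j < p \<and> s!(j-1) > s!(p-1) \<and> col s j = c"
proof -
  let ?P = "\<lambda>c. 1 \<le> c \<and> (\<forall>j. 1 \<le> j \<and> j < p \<and> s!(j-1) > s!(p-1) \<longrightarrow> col s j \<noteq> c)"
  have "\<not> ?P c" using not_less_Least[of c ?P] char[OF assms(1-3)] assms(5) by simp
  thus ?thesis using assms(4) by auto
qed

lemma propD: assumes "is_perm s" "1 \<le> p" "p \<le> length s" "1 \<le> q" "q < p" "s!(q-1) > s!(p-1)"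
  shows "col s q < col s p"
proof (rule ccontr)
  assume "\<not> col s q < col s p"
  hence le: "col s p \<le> col s q" by simp
  have cp: "1 \<le> col s p" using propA[OF assms(1-3)] .
  show False
  proof (cases "col s p = col s q")
    case True thus False using propB[OF assms] by simp
  next
    case False
    hence "col s p < col s q" using le by simp
    then obtain r where r: "1 \<le> r" "r < q" "s!(r-1) > s!(q-1)" "col s r = col s p"
      using propC[OF assms(1) assms(4) _ cp] assms by auto
    thus False using propB[OF assms(1-3), of r] assms by auto
  qed
qed

theorem mainTheorem14:
  fixes n y f i :: nat and \<pi> c :: "nat list"
  assumes "n \<ge> 2"
    and "inherited n \<pi> c"
    and "active_site n \<pi> c y f"
    and "i \<in> {1..length \<pi>}"
  shows "(c ! (i - 1) \<ge> f \<longrightarrow> y > \<pi> ! (i - 1))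
       \<and> (\<pi> ! (i - 1) < y \<and> c ! (i - 1) < f \<longrightarrow>
            (\<exists>k. i < k \<and> k \<le> length \<pi> \<and> \<pi> ! (k - 1) \<ge> y \<and> c ! (k - 1) = c ! (i - 1)))
       \<and> (\<pi> ! (i - 1) < y \<and> c ! (i - 1) < f \<longrightarrow>
            (\<exists>h. i < h \<and> h \<le> length \<pi> \<and> \<pi> ! (h - 1) \<ge> y \<and> c ! (h - 1) = f - 1))"
proof -
  define K where "K = length \<pi>"
  have li: "length (ins \<pi> y) = K + 1" by (simp add: ins_def K_def)
  obtain s where s: "s \<in> Av n" "length s \<ge> K + 1"
    "en (K+1) (s, ritmo s) = (ins \<pi> y, c @ [f])"
    using assms(3) li unfolding active_site_def inherited_def by auto
  have ps: "is_perm s" using s(1) by (simp add: Av_def)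
  define M where "M = length s"
  define d where "d = M - (K+1)"
  have e1: "std (drop d s) = ins \<pi> y" and e2: "drop d (ritmo s) = c @ [f]"
    using s(3) unfolding en_def d_def M_def by (auto simp: ritmo_def)
  have lc: "length c = K" using arg_cong[OF e2, of length] s(2) by (simp add: ritmo_def d_def M_def)
  have colt: "\<And>t. t \<le> K \<Longrightarrow> (c @ [f]) ! t = col s (d + t + 1)"
  proof -
    fix t assume t: "t \<le> K"
    have lr: "length (ritmo s) = M" by (auto simp: ritmo_def M_def Suc_le_eq)
    have "(c @ [f]) ! t = ritmo s ! (d + t)" by (metis e2 nth_drop lr d_def diff_le_self)
    also have "\<dots> = col s (d + t + 1)" using t s(2) d_def M_def
      by (simp add: ritmo_def col_def nth_upt del: upt_Suc)
    finally show "(c @ [f]) ! t = col s (d + t + 1)" .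
  qed
  have ci: "\<And>t. t < K \<Longrightarrow> c ! t = col s (d + t + 1)" using colt lc by (metis less_imp_le nth_append)
  have dk: "d + K + 1 = M" using d_def s(2) M_def by simp
  have cf0: "(c @ [f]) ! K = col s M" using colt[of K] dk by simp
  have cf: "f = col s M" using cf0 lc by (metis nth_append_length)
  let ?L = "map real \<pi> @ [real y - 1/2]"
  have ord: "\<And>a b. a \<le> K \<Longrightarrow> b \<le> K \<Longrightarrow> (s!(d+a) < s!(d+b)) \<longleftrightarrow> (?L!a < ?L!b)"
  proof -
    fix a b assume ab: "a \<le> K" "b \<le> K"
    have "s!(d+a) < s!(d+b) \<longleftrightarrow> drop d s ! a < drop d s ! b" using ab s(2) d_def M_def by simp
    also have "\<dots> \<longleftrightarrow> std (drop d s) ! a < std (drop d s) ! b"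
      using std_less[of a "drop d s" b] ab s(2) d_def M_def by simp
    also have "\<dots> \<longleftrightarrow> ?L!a < ?L!b" using e1 ab std_less[of a ?L b] K_def
      by (simp add: ins_def less_Suc_eq_le)
    finally show "(s!(d+a) < s!(d+b)) \<longleftrightarrow> (?L!a < ?L!b)" .
  qed
  have ordy1: "\<And>a. a < K \<Longrightarrow> (s!(d+a) < s!(d+K)) \<longleftrightarrow> \<pi>!a < y"
  proof -
    fix a assume a: "a < K"
    have "(s!(d+a) < s!(d+K)) \<longleftrightarrow> real (\<pi>!a) < real y - 1/2" using ord[of a K] a K_def
      by (simp add: nth_append)
    also have "\<dots> \<longleftrightarrow> \<pi>!a < y" by linarith
    finally show "(s!(d+a) < s!(d+K)) \<longleftrightarrow> \<pi>!a < y" .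
  qed
  have ordy2: "\<And>a. a < K \<Longrightarrow> (s!(d+K) < s!(d+a)) \<longleftrightarrow> y \<le> \<pi>!a"
  proof -
    fix a assume a: "a < K"
    have "(s!(d+K) < s!(d+a)) \<longleftrightarrow> real y - 1/2 < real (\<pi>!a)" using ord[of K a] a K_def
      by (simp add: nth_append)
    also have "\<dots> \<longleftrightarrow> y \<le> \<pi>!a" by linarith
    finally show "(s!(d+K) < s!(d+a)) \<longleftrightarrow> y \<le> \<pi>!a" .
  qed
  have i: "1 \<le> i" "i \<le> K" using assms(4) K_def by auto
  have MdK: "M = d + K + 1" using d_def s(2) M_def by simp
  have sM: "s!(M-1) = s!(d+K)" using MdK by simp
  have si: "s!(d+i-1) = s!(d+(i-1))" using i by (simp add: algebra_simps)
  have cii: "c!(i-1) = col s (d+i)" using ci[of "i-1"] i by simp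
  have q: "1 \<le> d+i" "d+i < M" "M \<le> length s" "1 \<le> M"
    using i MdK by (linarith, linarith, simp add: M_def, linarith)
  have P1: "c ! (i - 1) \<ge> f \<longrightarrow> y > \<pi> ! (i - 1)"
  proof (rule impI, rule ccontr)
    assume h: "c ! (i - 1) \<ge> f" "\<not> y > \<pi> ! (i - 1)"
    hence "s!(d+K) < s!(d+(i-1))" using ordy2[of "i-1"] i by simp
    hence "s!(d+i-1) > s!(M-1)" unfolding si sM .
    hence "col s (d+i) < col s M" by (rule propD[OF ps q(4) q(3) q(1) q(2)])
    thus False using h(1) unfolding cf cii by linarith
  qed
  have J: "\<And>j. \<pi> ! (i - 1) < y \<Longrightarrow> 1 \<le> j \<Longrightarrow> j < M \<Longrightarrow> s!(j-1) > s!(M-1) \<Longrightarrow> col s (d+i) \<le> col s j \<Longrightarrow>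
      (\<exists>k. i < k \<and> k \<le> K \<and> y \<le> \<pi>!(k-1) \<and> c!(k-1) = col s j)"
  proof -
    fix j assume h: "\<pi> ! (i - 1) < y" "1 \<le> j" "j < M" "s!(j-1) > s!(M-1)"
      "col s (d+i) \<le> col s j"
    have lo: "s!(d+(i-1)) < s!(d+K)" using ordy1[of "i-1"] i h(1) by auto
    have "d + i < j"
    proof (rule ccontr)
      assume "\<not> d + i < j"
      moreover have "j \<noteq> d + i" using lo h(4) sM si by force
      ultimately have ji: "j < d + i" by simp
      have gt: "s!(j-1) > s!(d+i-1)" using lo h(4) sM si by linarith
      have "d+i \<le> length s" using q by simp
      have "col s j < col s (d+i)" by (rule propD[OF ps q(1) \<open>d+i \<le> length s\<close> h(2) ji gt])
      thus False using h(5) by simp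
    qed
    define k where "k = j - d"
    have k: "i < k" "k \<le> K" "j = d + (k-1) + 1" using \<open>d+i<j\<close> h(3) MdK k_def by auto
    have "y \<le> \<pi>!(k-1)" using ordy2[of "k-1"] k h(4) sM by auto
    moreover have "c!(k-1) = col s j" using ci[of "k-1"] k by auto
    ultimately show "\<exists>k. i < k \<and> k \<le> K \<and> y \<le> \<pi>!(k-1) \<and> c!(k-1) = col s j" using k by blast
  qed
  have M1: "1 \<le> M" "M \<le> length s" using MdK M_def by auto
  have P2: "\<pi> ! (i - 1) < y \<and> c ! (i - 1) < f \<longrightarrow>
            (\<exists>k. i < k \<and> k \<le> length \<pi> \<and> \<pi> ! (k - 1) \<ge> y \<and> c ! (k - 1) = c ! (i - 1))"
  proof
    assume h: "\<pi> ! (i - 1) < y \<and> c ! (i - 1) < f"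
    have "1 \<le> col s (d+i)" using propA[OF ps, of "d+i"] i MdK M_def by auto
    then obtain j where j: "1 \<le> j" "j < M" "s!(j-1) > s!(M-1)" "col s j = col s (d+i)"
      using propC[OF ps M1, of "col s (d+i)"] h cf cii by auto
    show "\<exists>k. i < k \<and> k \<le> length \<pi> \<and> \<pi> ! (k - 1) \<ge> y \<and> c ! (k - 1) = c ! (i - 1)"
      using J[OF _ j(1-3)] j(4) h cii K_def by auto
  qed
  have P3: "\<pi> ! (i - 1) < y \<and> c ! (i - 1) < f \<longrightarrow>
            (\<exists>h. i < h \<and> h \<le> length \<pi> \<and> \<pi> ! (h - 1) \<ge> y \<and> c ! (h - 1) = f - 1)"
  proof
    assume h: "\<pi> ! (i - 1) < y \<and> c ! (i - 1) < f"
    have "1 \<le> col s (d+i)" using propA[OF ps, of "d+i"] i MdK M_def by auto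
    hence f2: "1 \<le> f - 1" "f - 1 < col s M" using h cii cf by auto
    then obtain j where j: "1 \<le> j" "j < M" "s!(j-1) > s!(M-1)" "col s j = f - 1"
      using propC[OF ps M1 f2] by auto
    have "col s (d+i) \<le> col s j" using j(4) h cii by auto
    thus "\<exists>h. i < h \<and> h \<le> length \<pi> \<and> \<pi> ! (h - 1) \<ge> y \<and> c ! (h - 1) = f - 1"
      using J[OF _ j(1-3)] j(4) h K_def by auto
  qed
  show ?thesis using P1 P2 P3 by blast
qed

end
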